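(* Let $X$ be an $n$-dimensional non-singular tropical hypersurface in a (non-singular) tropical toric variety $Y$. For a face $\sigma$ of $X$ of dimension $q$ and sedentarity $\operatorname{sed}(\sigma)$, we have $\mathcal{N}_p(\sigma)=0$ whenever $p\le n-q-\operatorname{sed}(\sigma)$.
   Context: A non-singular tropical toric variety $Y$ of dimension $n+1$ is the tropical toric variety associated to a simplicial unimodular rational polyhedral fan $\Sigma$ in $\mathbb{R}^{n+1}$; it is the disjoint union of strata $Y_\rho\cong\mathbb{R}^{n+1-\dim\rho}$, $\rho\in\Sigma$. The sedentarity of a point is the codimension in $Y$ of the stratum containing it, and $\operatorname{sed}(\sigma)$ is that of the relative interior points of $\sigma$. For $\rho$ with primitive ray generators $r_1,\dots,r_s$, $T_{\mathbb Z}(Y_\rho)=\mathbb{Z}^{n+1}/\langle r_1,\dots,r_s\rangle$, with quotient maps $\pi_{\rho\eta}$ for $\rho\subset\eta$; $T_{\mathbb Z}(\sigma)$ is the integer tangent lattice of a rational polyhedron $\sigma$ inside $T_{\mathbb Z}(Y_\rho)$ where $\operatorname{relint}\sigma\subset Y_\rho$. A tropical hypersurface $X$ in $Y$ is the closure of a tropical hypersurface in $Y_0=\mathbb{R}^{n+1}$ defined by a tropical polynomial, with the polyhedral structure dual to the induced regular subdivision of its Newton polytope; $X$ is non-singular if each $X\cap Y_\rho$ is a tropical hypersurface in $Y_\rho$ dual to a primitive regular triangulation of its Newton polytope. For a face $\tau$ of $X$ with relative interior in $Y_\rho$: $\mathcal{F}^X_p(\tau)=\sum_\sigma\bigwedge^pT_{\mathbb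 Z}(\sigma)$ over faces $\sigma\supseteq\tau$ of $X$ with relative interior in $Y_\rho$, and $\mathcal{F}^Y_p|_X(\tau)=\bigwedge^pT_{\mathbb Z}(Y_\rho)$. $\mathcal{N}_p$ is the cokernel cosheaf on $X$ of the natural inclusion $\mathcal{F}^X_p\to\mathcal{F}^Y_p|_X$, i.e. $\mathcal{N}_p(\tau)=\bigwedge^pT_{\mathbb Z}(Y_\rho)/\mathcal{F}^X_p(\tau)$. *)

theory Defs
  imports "HOL-Analysis.Analysis"
begin

text \<open>The lattice N = Z^(n+1) inside R^(n+1) = real^'d, with CARD('d) = n+1.
  The dual lattice M is identified with the same integer points via the inner product.\<close>

definition lat :: "(real^'d) set" where
  "lat = {x. \<forall>i. x $ i \<in> \<int>}"

definition int_span :: "(real^'d) set \<Rightarrow> (real^'d) set" where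
  "int_span S = {\<Sum>x\<in>F. of_int (k x) *\<^sub>R x | F k. finite F \<and> F \<subseteq> S}"

definition extends_to_basis :: "(real^'d) set \<Rightarrow> (real^'d) set \<Rightarrow> bool" where
  "extends_to_basis L S = (\<exists>B. S \<subseteq> B \<and> B \<subseteq> L \<and> independent B \<and> int_span B = L)"

section \<open>Exterior powers (written out in Pluecker coordinates)\<close>

text \<open>v_0 \<and> ... \<and> v_(p-1) in \<and>^p Z^(n+1), represented by its coordinate function
  on index tuples (i_0,...,i_(p-1)): the p x p minor det [v_j $ i_k].\<close>
definition wedge :: "nat \<Rightarrow> (nat \<Rightarrow> real^'d) \<Rightarrow> ('d list \<Rightarrow> real)" where
  "wedge p vs = (\<lambda>is. if length is = p then
      (\<Sum>\<pi> | \<pi> permutes {..<p}. of_int (sign \<pi>) * (\<Prod>j<p. vs j $ (is ! \<pi> j))) else 0)"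

definition zspan_fun :: "('b \<Rightarrow> real) set \<Rightarrow> ('b \<Rightarrow> real) set" where
  "zspan_fun S = {(\<lambda>i. \<Sum>x\<in>F. of_int (k x) * x i) | F k. finite F \<and> F \<subseteq> S}"

text \<open>\<and>^p L for a saturated sublattice L of Z^(n+1), as a subgroup of \<and>^p Z^(n+1).\<close>
definition ext_power :: "nat \<Rightarrow> (real^'d) set \<Rightarrow> ('d list \<Rightarrow> real) set" where
  "ext_power p L = zspan_fun {wedge p vs | vs. \<forall>j<p. vs j \<in> L}"

text \<open>The kernel <R> \<and> \<and>^(p-1) Z^(n+1) of \<and>^p Z^(n+1) \<rightarrow> \<and>^p (Z^(n+1)/<R>).\<close>
definition wedge_kernel :: "nat \<Rightarrow> (real^'d) set \<Rightarrow> ('d list \<Rightarrow> real) set" where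
  "wedge_kernel p R = zspan_fun {wedge p vs | vs. (\<forall>j<p. vs j \<in> lat) \<and> (\<exists>j<p. vs j \<in> int_span R)}"

text \<open>A simplicial unimodular cone is encoded by its (finite) set of primitive ray generators.\<close>
definition cone_of :: "(real^'d) set \<Rightarrow> (real^'d) set" where
  "cone_of R = {\<Sum>r\<in>R. a r *\<^sub>R r | a. \<forall>r\<in>R. a r \<ge> 0}"

definition nonsingular_fan :: "(real^'d) set set \<Rightarrow> bool" where
  "nonsingular_fan \<Sigma> \<longleftrightarrow> finite \<Sigma> \<and> \<Sigma> \<noteq> {} \<and>
     (\<forall>R\<in>\<Sigma>. finite R \<and> extends_to_basis lat R) \<and>
     (\<forall>R\<in>\<Sigma>. \<forall>S. S \<subseteq> R \<longrightarrow> S \<in> \<Sigma>) \<and>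
     (\<forall>R1\<in>\<Sigma>. \<forall>R2\<in>\<Sigma>. cone_of R1 \<inter> cone_of R2 = cone_of (R1 \<inter> R2))"

definition tval :: "(real^'d) set \<Rightarrow> (real^'d \<Rightarrow> real) \<Rightarrow> real^'d \<Rightarrow> real" where
  "tval A c x = Max ((\<lambda>m. c m + m \<bullet> x) ` A)"

definition targ :: "(real^'d) set \<Rightarrow> (real^'d \<Rightarrow> real) \<Rightarrow> real^'d \<Rightarrow> (real^'d) set" where
  "targ A c x = {m \<in> A. c m + m \<bullet> x = tval A c x}"

definition tvar :: "(real^'d) set \<Rightarrow> (real^'d \<Rightarrow> real) \<Rightarrow> (real^'d) set" where
  "tvar A c = {x. 2 \<le> card (targ A c x)}"

definition subdiv_cells :: "(real^'d) set \<Rightarrow> (real^'d \<Rightarrow> real) \<Rightarrow> (real^'d) set set" where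
  "subdiv_cells A c = {convex hull (targ A c x) | x. True}"

definition dual_faces :: "(real^'d) set \<Rightarrow> (real^'d \<Rightarrow> real) \<Rightarrow> (real^'d) set set" where
  "dual_faces A c = {{x. \<epsilon> \<subseteq> convex hull (targ A c x)} | \<epsilon>. \<epsilon> \<in> subdiv_cells A c \<and> aff_dim \<epsilon> \<ge> 1}"

definition primitive_triangulation :: "(real^'d) set \<Rightarrow> (real^'d) set \<Rightarrow> (real^'d \<Rightarrow> real) \<Rightarrow> bool" where
  "primitive_triangulation L A c \<longleftrightarrow>
     (\<forall>x. \<exists>m0\<in>targ A c x. extends_to_basis L ((\<lambda>m. m - m0) ` (targ A c x - {m0})))"

text \<open>A subset of the stratum Y_rho = R^(n+1)/span rho is represented by its (span rho-invariant)
  preimage in R^(n+1).  The dual lattice of T_Z(Y_rho) is the lattice below.\<close>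
definition stratum_dual_lat :: "(real^'d) set \<Rightarrow> (real^'d) set" where
  "stratum_dual_lat R = {m \<in> lat. \<forall>r\<in>R. m \<bullet> r = 0}"

text \<open>Preimage of (closure of S in Y) \<inter> Y_rho, for S \<subseteq> Y_0 = R^(n+1): a sequence x_k in Y_0
  converges to [y] in Y_rho iff x_k = y_k + \<Sum> t_(k,r) r with y_k \<rightarrow> y and every t_(k,r) \<rightarrow> +\<infinity>.\<close>
definition clos_in :: "(real^'d) set \<Rightarrow> (real^'d) set \<Rightarrow> (real^'d) set" where
  "clos_in R S = {y. \<exists>xs ys ts. (\<forall>k. xs k \<in> S) \<and> ys \<longlonglongrightarrow> y \<and>
      (\<forall>r\<in>R. filterlim (\<lambda>k. ts k r) at_top sequentially) \<and>
      (\<forall>k. xs k = ys k + (\<Sum>r\<in>R. ts k r *\<^sub>R r))}"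

text \<open>Faces of X = closure of the hypersurface of (A,c) whose relative interior lies in Y_rho.\<close>
definition faces_in :: "(real^'d) set \<Rightarrow> (real^'d \<Rightarrow> real) \<Rightarrow> (real^'d) set \<Rightarrow> (real^'d) set set" where
  "faces_in A c R = {clos_in R \<sigma> | \<sigma>. \<sigma> \<in> dual_faces A c \<and> clos_in R \<sigma> \<noteq> {}}"

text \<open>X (closure of V(f) in Y) is non-singular: each X \<inter> Y_rho, with its polyhedral structure,
  is a tropical hypersurface in Y_rho dual to a primitive regular triangulation.\<close>
definition nonsingular_hypersurface :: "(real^'d) set set \<Rightarrow> (real^'d) set \<Rightarrow> (real^'d \<Rightarrow> real) \<Rightarrow> bool" where
  "nonsingular_hypersurface \<Sigma> A c \<longleftrightarrow>
     (\<forall>R\<in>\<Sigma>. \<exists>A' c'. finite A' \<and> A' \<noteq> {} \<and> A' \<subseteq> stratum_dual_lat R \<and>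
        tvar A' c' = clos_in R (tvar A c) \<and>
        dual_faces A' c' = faces_in A c R \<and>
        primitive_triangulation (stratum_dual_lat R) A' c')"

text \<open>Preimage in Z^(n+1) of T_Z(sigma) \<subseteq> T_Z(Y_rho).\<close>
definition tangent_lat :: "(real^'d) set \<Rightarrow> (real^'d) set" where
  "tangent_lat \<sigma> = lat \<inter> span {x - y | x y. x \<in> \<sigma> \<and> y \<in> \<sigma>}"

text \<open>N_p(tau) = \<and>^p T_Z(Y_rho) / F^X_p(tau) = \<and>^p Z^(n+1) / (ker + sum of \<and>^p T_Z(sigma)).
  N_sub is the subgroup of \<and>^p Z^(n+1) being divided out.\<close>
definition N_sub :: "(real^'d) set \<Rightarrow> (real^'d \<Rightarrow> real) \<Rightarrow> nat \<Rightarrow> (real^'d) set \<Rightarrow> (real^'d) set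
    \<Rightarrow> ('d list \<Rightarrow> real) set" where
  "N_sub A c p R \<tau> = zspan_fun (wedge_kernel p R \<union>
      (\<Union>\<sigma>\<in>{\<sigma> \<in> faces_in A c R. \<tau> \<subseteq> \<sigma>}. ext_power p (tangent_lat \<sigma>)))"

definition N_cosheaf :: "(real^'d) set \<Rightarrow> (real^'d \<Rightarrow> real) \<Rightarrow> nat \<Rightarrow> (real^'d) set \<Rightarrow> (real^'d) set
    \<Rightarrow> ('d list \<Rightarrow> real) set set" where
  "N_cosheaf A c p R \<tau> =
     (\<lambda>w. {(\<lambda>i. w i + g i) | g. g \<in> N_sub A c p R \<tau>}) ` ext_power p lat"

text \<open>Dimension of a face tau in Y_rho (tau given by its preimage).\<close>
definition face_dim :: "(real^'d) set \<Rightarrow> (real^'d) set \<Rightarrow> int" where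
  "face_dim R \<tau> = aff_dim \<tau> - int (card R)"

end

theory Submission
  imports Defs "HOL-Library.FuncSet"
begin

lemma zspan_zero: "(\<lambda>i. 0) \<in> zspan_fun S"
  unfolding zspan_fun_def by (rule CollectI, rule exI[of _ "{}"], auto)

lemma zspan_base: "x \<in> S \<Longrightarrow> x \<in> zspan_fun S"
  unfolding zspan_fun_def
  by (rule CollectI, rule exI[of _ "{x}"], rule exI[of _ "\<lambda>_. 1"], auto)

lemma zspan_add:
  assumes "a \<in> zspan_fun S" "b \<in> zspan_fun S"
  shows "(\<lambda>i. a i + b i) \<in> zspan_fun S"
proof -
  obtain F1 k1 where 1: "a = (\<lambda>i. \<Sum>x\<in>F1. of_int (k1 x) * x i)" "finite F1" "F1 \<subseteq> S"
    using assms(1) unfolding zspan_fun_def by blast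
  obtain F2 k2 where 2: "b = (\<lambda>i. \<Sum>x\<in>F2. of_int (k2 x) * x i)" "finite F2" "F2 \<subseteq> S"
    using assms(2) unfolding zspan_fun_def by blast
  define k where "k x = (if x \<in> F1 then k1 x else 0) + (if x \<in> F2 then k2 x else 0)" for x
  have "(\<lambda>i. a i + b i) = (\<lambda>i. \<Sum>x\<in>F1 \<union> F2. of_int (k x) * x i)"
  proof
    fix i
    have "(\<Sum>x\<in>F1 \<union> F2. of_int (k x) * x i) =
       (\<Sum>x\<in>F1 \<union> F2. (if x \<in> F1 then of_int (k1 x) * x i else 0)) +
       (\<Sum>x\<in>F1 \<union> F2. (if x \<in> F2 then of_int (k2 x) * x i else 0))"
      unfolding k_def sum.distrib[symmetric] by (intro sum.cong) (auto simp: distrib_right)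
    also have "\<dots> = (\<Sum>x\<in>F1. of_int (k1 x) * x i) + (\<Sum>x\<in>F2. of_int (k2 x) * x i)"
      using 1 2 by (simp add: sum.inter_restrict[symmetric] Int_absorb1 Int_absorb2 Int_commute)
    finally show "a i + b i = (\<Sum>x\<in>F1 \<union> F2. of_int (k x) * x i)" using 1 2 by simp
  qed
  then show ?thesis unfolding zspan_fun_def using 1 2 by blast
qed

lemma zspan_scale:
  assumes "a \<in> zspan_fun S"
  shows "(\<lambda>i. of_int c * a i) \<in> zspan_fun S"
proof -
  obtain F1 k1 where 1: "a = (\<lambda>i. \<Sum>x\<in>F1. of_int (k1 x) * x i)" "finite F1" "F1 \<subseteq> S"
    using assms(1) unfolding zspan_fun_def by blast
  have "(\<lambda>i. of_int c * a i) = (\<lambda>i. \<Sum>x\<in>F1. of_int (c * k1 x) * x i)"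
    using 1 by (simp add: sum_distrib_left mult.assoc)
  then show ?thesis unfolding zspan_fun_def using 1(2,3)
    by (intro CollectI exI[of _ F1] exI[of _ "\<lambda>x. c * k1 x"]) simp
qed

lemma zspan_sum:
  assumes "finite I" "\<And>f. f \<in> I \<Longrightarrow> g f \<in> zspan_fun S"
  shows "(\<lambda>i. \<Sum>f\<in>I. of_int (k f) * g f i) \<in> zspan_fun S"
  using assms
proof (induction I rule: finite_induct)
  case empty
  then show ?case using zspan_zero by simp
next
  case (insert x F)
  have "(\<lambda>i. \<Sum>f\<in>insert x F. of_int (k f) * g f i) =
        (\<lambda>i. of_int (k x) * g x i + (\<Sum>f\<in>F. of_int (k f) * g f i))"
    using insert by simp
  moreover have "(\<lambda>i. of_int (k x) * g x i + (\<Sum>f\<in>F. of_int (k f) * g f i)) \<in> zspan_fun S"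
    using zspan_add[OF zspan_scale[of "g x" S "k x"]] insert by auto
  ultimately show ?case by simp
qed

lemma zspan_mono:
  assumes "S \<subseteq> zspan_fun S'"
  shows "zspan_fun S \<subseteq> zspan_fun S'"
proof
  fix a assume "a \<in> zspan_fun S"
  then obtain F k where 1: "a = (\<lambda>i. \<Sum>x\<in>F. of_int (k x) * x i)" "finite F" "F \<subseteq> S"
    unfolding zspan_fun_def by blast
  show "a \<in> zspan_fun S'" unfolding 1(1) using 1 assms by (intro zspan_sum) auto
qed

lemma zspan_diff:
  assumes "a \<in> zspan_fun S" "b \<in> zspan_fun S"
  shows "(\<lambda>i. a i - b i) \<in> zspan_fun S"
  using zspan_add[OF assms(1) zspan_scale[OF assms(2), of "-1"]] by simp

lemma lat_iff: "x \<in> lat \<longleftrightarrow> (\<forall>i. x $ i \<in> \<int>)" unfolding lat_def by simp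

lemma lat_add: "x \<in> lat \<Longrightarrow> y \<in> lat \<Longrightarrow> x + y \<in> lat"
  by (auto simp: lat_iff)
lemma lat_diff: "x \<in> lat \<Longrightarrow> y \<in> lat \<Longrightarrow> x - y \<in> lat"
  by (auto simp: lat_iff)
lemma lat_scale: "x \<in> lat \<Longrightarrow> a \<in> \<int> \<Longrightarrow> a *\<^sub>R x \<in> lat"
  by (auto simp: lat_iff)
lemma lat_sum: "(\<And>j. j \<in> F \<Longrightarrow> f j \<in> lat) \<Longrightarrow> sum f F \<in> lat"
  by (induction F rule: infinite_finite_induct) (auto simp: lat_add, auto simp: lat_iff)
lemma lat_inner: "x \<in> lat \<Longrightarrow> y \<in> lat \<Longrightarrow> x \<bullet> y \<in> \<int>"
  by (auto simp: lat_iff inner_vec_def intro!: Ints_sum Ints_mult)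
lemma axis_lat: "axis i 1 \<in> lat"
  by (auto simp: lat_iff axis_def)

lemma int_span_lat: "B \<subseteq> lat \<Longrightarrow> int_span B \<subseteq> lat"
  unfolding int_span_def by (auto intro!: lat_sum lat_scale)

lemma int_span_linear_Ints:
  fixes g :: "real^'d \<Rightarrow> real"
  assumes "linear g" "\<And>b. b \<in> B \<Longrightarrow> g b \<in> \<int>" "x \<in> int_span B"
  shows "g x \<in> \<int>"
proof -
  obtain F k where "x = (\<Sum>y\<in>F. of_int (k y) *\<^sub>R y)" "finite F" "F \<subseteq> B"
    using assms(3) unfolding int_span_def by blast
  then show ?thesis using assms(1,2)
    by (auto simp: linear_sum linear_scale real_scaleR_def intro!: Ints_sum Ints_mult)
qed

lemma int_span_span: "int_span B \<subseteq> span B"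
  unfolding int_span_def by (force intro: span_sum span_scale span_base)

lemma wedge_expand:
  fixes vs :: "nat \<Rightarrow> real^'d" and w :: "nat \<Rightarrow> 'l \<Rightarrow> real^'d"
  assumes fin: "finite I" and vs: "\<forall>j<p. vs j = (\<Sum>l\<in>I. a j l *\<^sub>R w j l)"
  shows "wedge p vs = (\<lambda>is. \<Sum>f\<in>PiE {..<p} (\<lambda>_. I). (\<Prod>j<p. a j (f j)) * wedge p (\<lambda>j. w j (f j)) is)"
proof
  fix "is" :: "'d list"
  show "wedge p vs is = (\<Sum>f\<in>PiE {..<p} (\<lambda>_. I). (\<Prod>j<p. a j (f j)) * wedge p (\<lambda>j. w j (f j)) is)"
  proof (cases "length is = p")
    case False
    then show ?thesis by (simp add: wedge_def)
  next
    case True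
    let ?P = "{\<pi>. \<pi> permutes {..<p}}"
    let ?F = "PiE {..<p} (\<lambda>_. I)"
    have "wedge p vs is = (\<Sum>\<pi>\<in>?P. of_int (sign \<pi>) * (\<Prod>j<p. vs j $ (is ! \<pi> j)))"
      using True by (simp add: wedge_def)
    also have "\<dots> = (\<Sum>\<pi>\<in>?P. of_int (sign \<pi>) * (\<Prod>j<p. \<Sum>l\<in>I. a j l * w j l $ (is ! \<pi> j)))"
      using vs by (intro sum.cong refl arg_cong2[where f="(*)"] prod.cong) auto
    also have "\<dots> = (\<Sum>\<pi>\<in>?P. of_int (sign \<pi>) * (\<Sum>f\<in>?F. \<Prod>j<p. a j (f j) * w j (f j) $ (is ! \<pi> j)))"
      by (subst prod_sum_PiE) (use fin in auto)
    also have "\<dots> = (\<Sum>\<pi>\<in>?P. \<Sum>f\<in>?F. (\<Prod>j<p. a j (f j)) * (of_int (sign \<pi>) * (\<Prod>j<p. w j (f j) $ (is ! \<pi> j))))"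
      by (simp add: sum_distrib_left prod.distrib mult.assoc mult.left_commute)
    also have "\<dots> = (\<Sum>f\<in>?F. \<Sum>\<pi>\<in>?P. (\<Prod>j<p. a j (f j)) * (of_int (sign \<pi>) * (\<Prod>j<p. w j (f j) $ (is ! \<pi> j))))"
      by (rule sum.swap)
    also have "\<dots> = (\<Sum>f\<in>?F. (\<Prod>j<p. a j (f j)) * wedge p (\<lambda>j. w j (f j)) is)"
      using True by (simp add: wedge_def sum_distrib_left)
    finally show ?thesis .
  qed
qed

lemma targ_ne:
  assumes "finite A" "A \<noteq> {}"
  shows "targ A c x \<noteq> {}"
proof -
  have "tval A c x \<in> (\<lambda>m. c m + m \<bullet> x) ` A" unfolding tval_def using assms by (intro Max_in) auto
  then show ?thesis unfolding targ_def by auto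
qed

lemma tval_ge: "finite A \<Longrightarrow> m \<in> A \<Longrightarrow> c m + m \<bullet> x \<le> tval A c x"
  unfolding tval_def by (intro Max_ge) auto

lemma perturb:
  fixes x v :: "real^'d"
  assumes fin: "finite A"
    and le: "\<And>m. m \<in> targ A c x \<Longrightarrow> m \<bullet> v \<le> \<mu>"
    and ex: "\<exists>m\<in>targ A c x. m \<bullet> v = \<mu>"
  shows "\<exists>s>0. targ A c (x + s *\<^sub>R v) = {m \<in> targ A c x. m \<bullet> v = \<mu>}"
proof -
  define M where "M = tval A c x"
  define T where "T = targ A c x"
  have T: "m \<in> T \<longleftrightarrow> m \<in> A \<and> c m + m \<bullet> x = M" for m
    unfolding T_def targ_def M_def by auto
  have lt: "c m + m \<bullet> x < M" if "m \<in> A - T" for m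
    using tval_ge[OF fin, of m c x] that T unfolding M_def by force
  have "\<forall>m\<in>A - T. eventually (\<lambda>s. c m + m \<bullet> (x + s *\<^sub>R v) - (M + s * \<mu>) < 0) (at_right (0::real))"
  proof
    fix m assume m: "m \<in> A - T"
    have "((\<lambda>s. c m + m \<bullet> (x + s *\<^sub>R v) - (M + s * \<mu>)) \<longlongrightarrow> c m + m \<bullet> (x + 0 *\<^sub>R v) - (M + 0 * \<mu>)) (at_right (0::real))"
      by (intro tendsto_intros)
    moreover have "c m + m \<bullet> (x + 0 *\<^sub>R v) - (M + 0 * \<mu>) < 0" using lt[OF m] by simp
    ultimately show "eventually (\<lambda>s. c m + m \<bullet> (x + s *\<^sub>R v) - (M + s * \<mu>) < 0) (at_right (0::real))"
      by (rule order_tendstoD(2))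
  qed
  then have "eventually (\<lambda>s. \<forall>m\<in>A - T. c m + m \<bullet> (x + s *\<^sub>R v) - (M + s * \<mu>) < 0) (at_right (0::real))"
    using fin by (intro eventually_ball_finite) auto
  then obtain b where b: "b > 0" "\<And>s. s > 0 \<Longrightarrow> s < b \<Longrightarrow> \<forall>m\<in>A - T. c m + m \<bullet> (x + s *\<^sub>R v) - (M + s * \<mu>) < 0"
    unfolding eventually_at_right_field by auto
  define s where "s = b / 2"
  have s: "s > 0" "\<forall>m\<in>A - T. c m + m \<bullet> (x + s *\<^sub>R v) < M + s * \<mu>"
    using b s_def by auto
  have valT: "c m + m \<bullet> (x + s *\<^sub>R v) = M + s * (m \<bullet> v)" if "m \<in> T" for m
    using T that by (simp add: inner_add_right)
  obtain m1 where m1: "m1 \<in> T" "m1 \<bullet> v = \<mu>" using ex T_def by auto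
  have tv: "tval A c (x + s *\<^sub>R v) = M + s * \<mu>"
    unfolding tval_def
  proof (rule Max_eqI)
    show "finite ((\<lambda>m. c m + m \<bullet> (x + s *\<^sub>R v)) ` A)" using fin by simp
    show "y \<le> M + s * \<mu>" if y: "y \<in> (\<lambda>m. c m + m \<bullet> (x + s *\<^sub>R v)) ` A" for y
    proof -
      obtain m where m: "m \<in> A" "y = c m + m \<bullet> (x + s *\<^sub>R v)" using y by auto
      show ?thesis
      proof (cases "m \<in> T")
        case True
        then show ?thesis using valT[OF True] le[of m] m s(1) T_def
          by (simp add: mult_left_mono)
      next
        case False
        then show ?thesis using s(2) m by force
      qed
    qed
    show "M + s * \<mu> \<in> (\<lambda>m. c m + m \<bullet> (x + s *\<^sub>R v)) ` A"
      using m1 valT[OF m1(1)] T by force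
  qed
  have "targ A c (x + s *\<^sub>R v) = {m \<in> T. m \<bullet> v = \<mu>}"
  proof (intro set_eqI iffI)
    fix m assume "m \<in> targ A c (x + s *\<^sub>R v)"
    then have m: "m \<in> A" "c m + m \<bullet> (x + s *\<^sub>R v) = M + s * \<mu>" unfolding targ_def tv by auto
    then have "m \<in> T" using s(2) by force
    then show "m \<in> {m \<in> T. m \<bullet> v = \<mu>}" using m valT s(1) by auto
  next
    fix m assume "m \<in> {m \<in> T. m \<bullet> v = \<mu>}"
    then show "m \<in> targ A c (x + s *\<^sub>R v)" using valT T unfolding targ_def tv by auto
  qed
  then show ?thesis using s(1) T_def by blast
qed

lemma linear_as_inner:
  fixes g :: "real^'d \<Rightarrow> real"
  assumes "linear g"
  shows "(\<chi> i. g (axis i 1)) \<bullet> x = g x"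
proof -
  have "x = (\<Sum>i\<in>UNIV. x $ i *\<^sub>R axis i 1)"
    using basis_expansion[of x] by (simp add: scalar_mult_eq_scaleR)
  then have "g x = g (\<Sum>i\<in>UNIV. x $ i *\<^sub>R axis i 1)" by simp
  also have "\<dots> = (\<Sum>i\<in>UNIV. g (x $ i *\<^sub>R axis i 1))" by (simp add: linear_sum[OF assms])
  also have "\<dots> = (\<Sum>i\<in>UNIV. x $ i * g (axis i 1))" by (simp add: linear_scale[OF assms])
  finally have "g x = (\<Sum>i\<in>UNIV. x $ i * g (axis i 1))" .
  then show ?thesis by (simp add: inner_vec_def mult.commute)
qed

lemma span_lat: "span lat = UNIV"
proof -
  have "x \<in> span lat" for x :: "real^'d"
  proof -
    have "x = (\<Sum>i\<in>UNIV. x $ i *\<^sub>R axis i 1)"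
      using basis_expansion[of x] by (simp add: scalar_mult_eq_scaleR)
    also have "\<dots> \<in> span lat" by (rule span_sum, rule span_scale, rule span_base, rule axis_lat)
    finally show ?thesis .
  qed
  then show ?thesis by auto
qed

lemma span_basis_lat:
  assumes "int_span B = lat"
  shows "span B = (UNIV :: (real^'d) set)"
proof -
  have "lat \<subseteq> span B" using int_span_span assms by blast
  then have "span lat \<subseteq> span B" by (meson span_minimal subspace_span)
  then show ?thesis using span_lat by auto
qed

lemma zero_if_orth:
  fixes z :: "real^'d"
  assumes "span B = UNIV" "\<And>b. b \<in> B \<Longrightarrow> z \<bullet> b = 0"
  shows "z = 0"
proof -
  have "orthogonal z z" using assms by (intro orthogonal_to_span[of z B]) (auto simp: orthogonal_def)
  then show ?thesis by (simp add: orthogonal_def)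
qed

lemma dual_basis:
  fixes B :: "(real^'d) set"
  assumes "independent B" "int_span B = lat" "b \<in> B"
  shows "\<exists>y\<in>lat. \<forall>b'\<in>B. y \<bullet> b' = (if b' = b then 1 else 0)"
proof -
  obtain g :: "real^'d \<Rightarrow> real" where g: "linear g" "\<forall>x\<in>B. g x = (if x = b then 1 else 0)"
    using linear_independent_extend[OF assms(1), of "\<lambda>x. if x = b then 1 else 0"] by blast
  define y where "y = (\<chi> i. g (axis i 1))"
  have yg: "y \<bullet> x = g x" for x unfolding y_def using linear_as_inner[OF g(1)] .
  have "y \<in> lat"
    unfolding lat_iff
  proof
    fix i
    have "y $ i = g (axis i 1)" unfolding y_def by simp
    moreover have "g (axis i 1) \<in> \<int>"
    proof (rule int_span_linear_Ints[of g B])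
      show "linear g" by (rule g(1))
      show "g b \<in> \<int>" if "b \<in> B" for b using g(2) that by simp
      show "axis i 1 \<in> int_span B" using axis_lat assms(2) by simp
    qed
    ultimately show "y $ i \<in> \<int>" by simp
  qed
  moreover have "\<forall>b'\<in>B. y \<bullet> b' = (if b' = b then 1 else 0)" using g(2) by (simp add: yg)
  ultimately show ?thesis by blast
qed

lemma edge_duals:
  fixes R B1 B2 V :: "(real^'d) set"
  assumes B1: "R \<subseteq> B1" "B1 \<subseteq> lat" "independent B1" "int_span B1 = lat"
  and B2: "V \<subseteq> B2" "B2 \<subseteq> stratum_dual_lat R" "independent B2" "int_span B2 = stratum_dual_lat R"
  and v: "v \<in> V"
  shows "\<exists>y\<in>lat. \<forall>v'\<in>V. y \<bullet> v' = (if v' = v then 1 else 0)"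
proof -
  define M where "M = stratum_dual_lat R"
  have finB1: "finite B1" using B1(3) finiteI_independent by blast
  define C where "C = B1 - R"
  have finC: "finite C" using finB1 C_def by simp
  have "\<forall>b\<in>B1. \<exists>y. y \<in> lat \<and> (\<forall>b'\<in>B1. y \<bullet> b' = (if b' = b then 1 else 0))"
    using dual_basis[OF B1(3,4)] by blast
  then obtain d where d0: "\<forall>b\<in>B1. d b \<in> lat \<and> (\<forall>b'\<in>B1. d b \<bullet> b' = (if b' = b then 1 else 0))"
    by (rule bchoice_iff[THEN iffD1, elim_format]) blast
  have dlat: "\<And>b. b \<in> B1 \<Longrightarrow> d b \<in> lat" using d0 by blast
  have dinner: "\<And>b b'. b \<in> B1 \<Longrightarrow> b' \<in> B1 \<Longrightarrow> d b \<bullet> b' = (if b' = b then 1 else 0)"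
    using d0 by blast
  have Mdef: "m \<in> M \<longleftrightarrow> m \<in> lat \<and> (\<forall>r\<in>R. m \<bullet> r = 0)" for m
    unfolding M_def stratum_dual_lat_def by auto
  have spanB1: "span B1 = UNIV" using span_basis_lat[OF B1(4)] .
  have expand: "m = (\<Sum>c\<in>C. (m \<bullet> c) *\<^sub>R d c)" if m: "m \<in> M" for m
  proof -
    have "m - (\<Sum>c\<in>C. (m \<bullet> c) *\<^sub>R d c) = 0"
    proof (rule zero_if_orth[OF spanB1])
      fix b assume b: "b \<in> B1"
      have "(\<Sum>c\<in>C. (m \<bullet> c) *\<^sub>R d c) \<bullet> b = (\<Sum>c\<in>C. (if b = c then m \<bullet> b else 0))"
        unfolding inner_sum_left
      proof (rule sum.cong[OF refl])
        fix c assume c: "c \<in> C"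
        then have "c \<in> B1" unfolding C_def by blast
        then show "((m \<bullet> c) *\<^sub>R d c) \<bullet> b = (if b = c then m \<bullet> b else 0)"
          using dinner[of c b] b by simp
      qed
      also have "\<dots> = (if b \<in> C then m \<bullet> b else 0)"
        using finC by (simp add: sum.delta)
      also have "\<dots> = m \<bullet> b"
      proof (cases "b \<in> C")
        case False
        then have "b \<in> R" using b C_def by blast
        then show ?thesis using m Mdef False by simp
      qed simp
      finally show "(m - (\<Sum>c\<in>C. (m \<bullet> c) *\<^sub>R d c)) \<bullet> b = 0" by (simp add: inner_diff_left)
    qed
    then show ?thesis by simp
  qed
  have dM: "d c \<in> M" if c: "c \<in> C" for c
  proof -
    have cB: "c \<in> B1" "c \<notin> R" using c C_def by auto
    have "d c \<bullet> r = 0" if r: "r \<in> R" for r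
      using dinner[of c r] cB r B1(1) by auto
    then show ?thesis using Mdef dlat[OF cB(1)] by blast
  qed
  obtain g :: "real^'d \<Rightarrow> real" where g: "linear g" "\<forall>x\<in>B2. g x = (if x = v then 1 else 0)"
    using linear_independent_extend[OF B2(3), of "\<lambda>x. if x = v then 1 else 0"] by blast
  define y where "y = (\<Sum>c\<in>C. g (d c) *\<^sub>R c)"
  have gint: "g (d c) \<in> \<int>" if c: "c \<in> C" for c
  proof (rule int_span_linear_Ints[of g B2])
    show "linear g" by (rule g(1))
    show "g b \<in> \<int>" if "b \<in> B2" for b using g(2) that by simp
    show "d c \<in> int_span B2" using dM[OF c] B2(4) M_def by simp
  qed
  have "y \<in> lat" unfolding y_def
  proof (rule lat_sum)
    fix c assume c: "c \<in> C"
    then have "c \<in> lat" using B1(2) C_def by blast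
    then show "g (d c) *\<^sub>R c \<in> lat" using lat_scale gint[OF c] by blast
  qed
  moreover have "y \<bullet> v' = (if v' = v then 1 else 0)" if v': "v' \<in> V" for v'
  proof -
    have v'M: "v' \<in> M" using v' B2(1,2) M_def by blast
    have "g v' = g (\<Sum>c\<in>C. (v' \<bullet> c) *\<^sub>R d c)" using expand[OF v'M] by simp
    also have "\<dots> = (\<Sum>c\<in>C. (v' \<bullet> c) * g (d c))"
      using g(1) by (simp add: linear_sum linear_scale)
    also have "\<dots> = y \<bullet> v'" unfolding y_def inner_sum_left by (simp add: inner_commute mult.commute)
    finally have "y \<bullet> v' = g v'" by simp
    moreover have "v' \<in> B2" using v' B2(1) by blast
    ultimately show ?thesis using g(2) by simp
  qed
  ultimately show ?thesis by blast
qed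

lemma dimS:
  fixes V :: "(real^'d) set"
  assumes "independent V"
  shows "dim {z. \<forall>v\<in>V. v \<bullet> z = 0} + card V = CARD('d)"
proof -
  have eq: "{y \<in> UNIV. \<forall>x \<in> span V. orthogonal x y} = {z. \<forall>v\<in>V. v \<bullet> z = 0}"
  proof (intro set_eqI iffI)
    fix z assume "z \<in> {y \<in> UNIV. \<forall>x \<in> span V. orthogonal x y}"
    then show "z \<in> {z. \<forall>v\<in>V. v \<bullet> z = 0}" by (auto simp: orthogonal_def span_base)
  next
    fix z assume z: "z \<in> {z. \<forall>v\<in>V. v \<bullet> z = 0}"
    have "orthogonal z x" if "x \<in> span V" for x
      using z that by (intro orthogonal_to_span[of x V z]) (auto simp: orthogonal_def inner_commute)
    then show "z \<in> {y \<in> UNIV. \<forall>x \<in> span V. orthogonal x y}" by (auto simp: orthogonal_commute)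
  qed
  have "dim {y \<in> UNIV. \<forall>x \<in> span V. orthogonal x y} + dim (span V) = dim (UNIV :: (real^'d) set)"
    by (rule dim_subspace_orthogonal_to_vectors) auto
  then show ?thesis using eq dim_span_eq_card_independent[OF assms] by simp
qed

theorem lemma3p7:
  fixes \<Sigma> :: "(real^'d) set set" and A :: "(real^'d) set" and c :: "real^'d \<Rightarrow> real"
    and R \<tau> :: "(real^'d) set" and p :: nat
  assumes "nonsingular_fan \<Sigma>"
    and "finite A" and "A \<subseteq> lat" and "2 \<le> card A"
    and "nonsingular_hypersurface \<Sigma> A c"
    and "R \<in> \<Sigma>" and "\<tau> \<in> faces_in A c R"
    and "int p \<le> (int CARD('d) - 1) - face_dim R \<tau> - int (card R)"
  shows "N_cosheaf A c p R \<tau> = {N_sub A c p R \<tau>}"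
proof -
  define M where "M = stratum_dual_lat R"
  have "\<exists>A' c'. finite A' \<and> A' \<noteq> {} \<and> A' \<subseteq> M \<and>
        tvar A' c' = clos_in R (tvar A c) \<and>
        dual_faces A' c' = faces_in A c R \<and>
        primitive_triangulation M A' c'"
    using assms(5) assms(6) unfolding nonsingular_hypersurface_def M_def by (rule bspec)
  then obtain A' c' where A': "finite A'" "A' \<noteq> {}" "A' \<subseteq> M"
      and DF: "dual_faces A' c' = faces_in A c R" and PT: "primitive_triangulation M A' c'"
    by (elim exE conjE) simp
  have "extends_to_basis lat R" using assms(1,6) unfolding nonsingular_fan_def by simp
  then obtain B1 where B1: "R \<subseteq> B1" "B1 \<subseteq> lat" "independent B1" "int_span B1 = lat"
    unfolding extends_to_basis_def by blast
  have "\<tau> \<in> dual_faces A' c'" using assms(7) DF by simp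
  then obtain x0 where \<tau>: "\<tau> = {x. convex hull (targ A' c' x0) \<subseteq> convex hull (targ A' c' x)}"
    unfolding dual_faces_def subdiv_cells_def by blast
  define T where "T = targ A' c' x0"
  obtain m0 where m0: "m0 \<in> T" and "extends_to_basis M ((\<lambda>m. m - m0) ` (T - {m0}))"
    using PT unfolding primitive_triangulation_def T_def by blast
  define V where "V = (\<lambda>m. m - m0) ` (T - {m0})"
  obtain B2 where B2: "V \<subseteq> B2" "B2 \<subseteq> M" "independent B2" "int_span B2 = M"
    using \<open>extends_to_basis M _\<close> unfolding extends_to_basis_def V_def by blast
  have indV: "independent V" using B2 independent_mono by blast
  have finV: "finite V" using indV finiteI_independent by blast
  have Mlat: "M \<subseteq> lat" unfolding M_def stratum_dual_lat_def by auto
  have Vlat: "V \<subseteq> lat" using B2 Mlat by blast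
  have TA: "T \<subseteq> A'" unfolding T_def targ_def by auto
  have Tcases: "m = m0 \<or> m - m0 \<in> V" if "m \<in> T" for m using that V_def by auto
  have VT: "v + m0 \<in> T" "v + m0 \<noteq> m0" if "v \<in> V" for v
    using that V_def by auto
  have "\<forall>v\<in>V. \<exists>y. y \<in> lat \<and> (\<forall>v'\<in>V. y \<bullet> v' = (if v' = v then 1 else 0))"
    using edge_duals[OF B1 B2(1) B2(2)[unfolded M_def] B2(3) B2(4)[unfolded M_def]] by blast
  then obtain y where y0: "\<forall>v\<in>V. y v \<in> lat \<and> (\<forall>v'\<in>V. y v \<bullet> v' = (if v' = v then 1 else 0))"
    by (rule bchoice_iff[THEN iffD1, elim_format]) blast
  have ylat: "\<And>v. v \<in> V \<Longrightarrow> y v \<in> lat" using y0 by blast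
  have yinner: "\<And>v v'. v \<in> V \<Longrightarrow> v' \<in> V \<Longrightarrow> y v \<bullet> v' = (if v' = v then 1 else 0)"
    using y0 by blast

  have x0\<tau>: "x0 \<in> \<tau>" using \<tau> by simp
  define S where "S = {z. \<forall>v\<in>V. v \<bullet> z = 0}"
  have S_sub: "S \<subseteq> span ((\<lambda>x. x - x0) ` \<tau>)"
  proof
    fix z assume z: "z \<in> S"
    have "\<exists>s>0. targ A' c' (x0 + s *\<^sub>R z) = {m \<in> targ A' c' x0. m \<bullet> z = m0 \<bullet> z}"
    proof (rule perturb[OF A'(1)])
      fix m assume "m \<in> targ A' c' x0"
      then have "m \<in> T" using T_def by simp
      then have "m \<bullet> z = m0 \<bullet> z"
        using Tcases[of m] z S_def by (auto simp: inner_diff_left)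
      then show "m \<bullet> z \<le> m0 \<bullet> z" by simp
    next
      show "\<exists>m\<in>targ A' c' x0. m \<bullet> z = m0 \<bullet> z" using m0 T_def by blast
    qed
    then obtain s where s: "s > 0" "targ A' c' (x0 + s *\<^sub>R z) = {m \<in> T. m \<bullet> z = m0 \<bullet> z}"
      using T_def by blast
    have "{m \<in> T. m \<bullet> z = m0 \<bullet> z} = T"
      using Tcases z S_def by (force simp: inner_diff_left)
    then have "x0 + s *\<^sub>R z \<in> \<tau>" using s \<tau> T_def by simp
    then have "(x0 + s *\<^sub>R z) - x0 \<in> (\<lambda>x. x - x0) ` \<tau>" by (rule imageI[of _ \<tau> "\<lambda>x. x - x0"])
    then have "(1/s) *\<^sub>R ((x0 + s *\<^sub>R z) - x0) \<in> span ((\<lambda>x. x - x0) ` \<tau>)"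
      by (rule span_scale[OF span_base])
    then show "z \<in> span ((\<lambda>x. x - x0) ` \<tau>)" using s(1) by simp
  qed
  have "aff_dim \<tau> = int (dim ((\<lambda>x. x - x0) ` \<tau>))"
    by (rule aff_dim_eq_dim_subtract, rule hull_inc, rule x0\<tau>)
  moreover have "dim S \<le> dim ((\<lambda>x. x - x0) ` \<tau>)"
    using dim_subset[OF S_sub] by simp
  moreover have "dim S + card V = CARD('d)" unfolding S_def by (rule dimS[OF indV])
  ultimately have "aff_dim \<tau> \<ge> int CARD('d) - int (card V)" by linarith
  then have pV: "p < card V" using assms(8) unfolding face_dim_def by linarith

  define sig where "sig v = {x. convex hull {m0, v + m0} \<subseteq> convex hull (targ A' c' x)}" for v
  have F1: "\<exists>x1. targ A' c' x1 = {m0, v + m0}" if v: "v \<in> V" for v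
  proof -
    define w where "w = - (\<Sum>v'\<in>V - {v}. y v')"
    have wv: "v'' \<bullet> w = (if v'' = v then 0 else -1)" if v'': "v'' \<in> V" for v''
    proof -
      have "v'' \<bullet> w = - (\<Sum>v'\<in>V - {v}. y v' \<bullet> v'')"
        unfolding w_def by (simp add: inner_sum_right inner_commute)
      also have "\<dots> = - (\<Sum>v'\<in>V - {v}. if v'' = v' then 1 else 0)"
        using yinner v'' by (intro arg_cong[where f=uminus] sum.cong) auto
      also have "\<dots> = - (if v'' \<in> V - {v} then 1 else 0)"
        using finV by (simp add: sum.delta)
      finally show ?thesis using v'' by auto
    qed
    have mw: "m \<bullet> w = m0 \<bullet> w + (m - m0) \<bullet> w" for m by (simp add: inner_diff_left)
    have "\<exists>s>0. targ A' c' (x0 + s *\<^sub>R w) = {m \<in> targ A' c' x0. m \<bullet> w = m0 \<bullet> w}"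
    proof (rule perturb[OF A'(1)])
      fix m assume "m \<in> targ A' c' x0"
      then have "m \<in> T" using T_def by simp
      then show "m \<bullet> w \<le> m0 \<bullet> w"
        using Tcases[of m] wv[of "m - m0"] mw[of m] by (cases "m = m0") auto
    next
      show "\<exists>m\<in>targ A' c' x0. m \<bullet> w = m0 \<bullet> w" using m0 T_def by blast
    qed
    then obtain s where s: "targ A' c' (x0 + s *\<^sub>R w) = {m \<in> T. m \<bullet> w = m0 \<bullet> w}"
      using T_def by blast
    have "{m \<in> T. m \<bullet> w = m0 \<bullet> w} = {m0, v + m0}"
    proof (intro set_eqI iffI)
      fix m assume m: "m \<in> {m \<in> T. m \<bullet> w = m0 \<bullet> w}"
      show "m \<in> {m0, v + m0}"
      proof (cases "m = m0")
        case False
        then have "m - m0 \<in> V" using Tcases m by blast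
        moreover have "(m - m0) \<bullet> w = 0" using m mw[of m] by simp
        ultimately have "m - m0 = v" using wv[of "m - m0"] by (auto split: if_splits)
        then show ?thesis by (auto simp: algebra_simps)
      qed simp
    next
      fix m assume "m \<in> {m0, v + m0}"
      then show "m \<in> {m \<in> T. m \<bullet> w = m0 \<bullet> w}"
        using m0 VT[OF v] wv[OF v] mw[of "v + m0"] by auto
    qed
    then show ?thesis using s by blast
  qed
  have F2: "sig v \<in> faces_in A c R" "\<tau> \<subseteq> sig v" if v: "v \<in> V" for v
  proof -
    obtain x1 where x1: "targ A' c' x1 = {m0, v + m0}" using F1[OF v] by blast
    have "convex hull {m0, v + m0} \<in> subdiv_cells A' c'"
      unfolding subdiv_cells_def using x1 by (metis (mono_tags, lifting) mem_Collect_eq)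
    moreover have "aff_dim (convex hull {m0, v + m0}) \<ge> 1"
      using VT[OF v] by (simp add: aff_dim_convex_hull aff_dim_2)
    ultimately have "sig v \<in> dual_faces A' c'"
      unfolding dual_faces_def sig_def by blast
    then show "sig v \<in> faces_in A c R" using DF by simp
    have sub: "convex hull {m0, v + m0} \<subseteq> convex hull T"
      using m0 VT[OF v] by (intro hull_mono) auto
    show "\<tau> \<subseteq> sig v"
    proof
      fix x assume "x \<in> \<tau>"
      then have "convex hull T \<subseteq> convex hull (targ A' c' x)" using \<tau> T_def by simp
      then show "x \<in> sig v" using sub sig_def by auto
    qed
  qed
  have F3: "z \<in> tangent_lat (sig v)" if v: "v \<in> V" and z: "z \<in> lat" "z \<bullet> v = 0" for v z
  proof -
    obtain x1 where x1: "targ A' c' x1 = {m0, v + m0}" using F1[OF v] by blast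
    have vz: "(v + m0) \<bullet> z = m0 \<bullet> z" using z(2) inner_commute[of z v] by (simp add: inner_add_left)
    have "\<exists>s>0. targ A' c' (x1 + s *\<^sub>R z) = {m \<in> targ A' c' x1. m \<bullet> z = m0 \<bullet> z}"
    proof (rule perturb[OF A'(1)])
      fix m assume "m \<in> targ A' c' x1"
      then show "m \<bullet> z \<le> m0 \<bullet> z" using x1 vz by auto
    next
      show "\<exists>m\<in>targ A' c' x1. m \<bullet> z = m0 \<bullet> z" using x1 by blast
    qed
    then obtain s where s: "s > 0" "targ A' c' (x1 + s *\<^sub>R z) = {m \<in> {m0, v + m0}. m \<bullet> z = m0 \<bullet> z}"
      using x1 by auto
    have "{m \<in> {m0, v + m0}. m \<bullet> z = m0 \<bullet> z} = {m0, v + m0}"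
      using vz by auto
    then have in1: "x1 + s *\<^sub>R z \<in> sig v" and in2: "x1 \<in> sig v" using s x1 sig_def by auto
    have "(x1 + s *\<^sub>R z) - x1 \<in> {x - y | x y. x \<in> sig v \<and> y \<in> sig v}" using in1 in2 by blast
    then have "(1/s) *\<^sub>R ((x1 + s *\<^sub>R z) - x1) \<in> span {x - y | x y. x \<in> sig v \<and> y \<in> sig v}"
      by (rule span_scale[OF span_base])
    then have "z \<in> span {x - y | x y. x \<in> sig v \<and> y \<in> sig v}" using s(1) by simp
    then show ?thesis using z(1) unfolding tangent_lat_def by blast
  qed

  define U where "U = wedge_kernel p R \<union>
      (\<Union>\<sigma>\<in>{\<sigma> \<in> faces_in A c R. \<tau> \<subseteq> \<sigma>}. ext_power p (tangent_lat \<sigma>))"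
  have NU: "N_sub A c p R \<tau> = zspan_fun U" unfolding N_sub_def U_def by simp
  have gen: "wedge p vs \<in> zspan_fun U" if vs: "\<forall>j<p. vs j \<in> lat" for vs
  proof -
    define I where "I = insert None (Some ` V)"
    define a where "a j l = (case l of None \<Rightarrow> 1 | Some v \<Rightarrow> vs j \<bullet> v)" for j l
    define w where "w j l = (case l of None \<Rightarrow> vs j - (\<Sum>v\<in>V. (vs j \<bullet> v) *\<^sub>R y v) | Some v \<Rightarrow> y v)" for j l
    define F where "F = PiE {..<p} (\<lambda>_. I)"
    have finI: "finite I" unfolding I_def using finV by simp
    have finF: "finite F" unfolding F_def using finI by (simp add: finite_PiE)
    have decomp: "\<forall>j<p. vs j = (\<Sum>l\<in>I. a j l *\<^sub>R w j l)"
    proof (intro allI impI)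
      fix j assume "j < p"
      have "(\<Sum>l\<in>I. a j l *\<^sub>R w j l) = a j None *\<^sub>R w j None + (\<Sum>l\<in>Some ` V. a j l *\<^sub>R w j l)"
        unfolding I_def using finV by (subst sum.insert) auto
      also have "(\<Sum>l\<in>Some ` V. a j l *\<^sub>R w j l) = (\<Sum>v\<in>V. a j (Some v) *\<^sub>R w j (Some v))"
        by (subst sum.reindex) auto
      also have "\<dots> = (\<Sum>v\<in>V. (vs j \<bullet> v) *\<^sub>R y v)" unfolding a_def w_def by simp
      finally show "vs j = (\<Sum>l\<in>I. a j l *\<^sub>R w j l)" unfolding a_def w_def by simp
    qed
    have exp: "wedge p vs = (\<lambda>is. \<Sum>f\<in>F. (\<Prod>j<p. a j (f j)) * wedge p (\<lambda>j. w j (f j)) is)"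
      unfolding F_def by (rule wedge_expand[OF finI decomp])
    have coefInt: "(\<Prod>j<p. a j (f j)) \<in> \<int>" if f: "f \<in> F" for f
    proof (rule Ints_prod)
      fix j assume j: "j \<in> {..<p}"
      have "f j \<in> I" using f j unfolding F_def by (rule PiE_mem)
      then show "a j (f j) \<in> \<int>"
      proof (cases "f j")
        case (Some v)
        then have "v \<in> V" using \<open>f j \<in> I\<close> I_def by auto
        then show ?thesis using Some a_def lat_inner[of "vs j" v] vs j Vlat by auto
      qed (simp add: a_def)
    qed
    have terms: "wedge p (\<lambda>j. w j (f j)) \<in> zspan_fun U" if f: "f \<in> F" for f
    proof -
      have c1: "card (f ` {..<p}) \<le> p" using card_image_le[of "{..<p}" f] by simp
      have c2: "card (Some ` V) = card V" by (simp add: card_image)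
      have "\<not> Some ` V \<subseteq> f ` {..<p}"
      proof
        assume "Some ` V \<subseteq> f ` {..<p}"
        then have "card (Some ` V) \<le> card (f ` {..<p})" by (intro card_mono) auto
        then show False using c1 c2 pV by linarith
      qed
      then obtain l where l: "l \<in> Some ` V" "l \<notin> f ` {..<p}" unfolding subset_iff by blast
      then obtain v where v: "v \<in> V" "Some v \<notin> f ` {..<p}" by (auto simp: image_iff)
      have wt0: "w j (f j) \<in> lat \<and> w j (f j) \<bullet> v = 0" if j: "j < p" for j
      proof -
        have fjI: "f j \<in> I" using PiE_mem[of f "{..<p}" "\<lambda>_. I" j] f j unfolding F_def by simp
        show "w j (f j) \<in> lat \<and> w j (f j) \<bullet> v = 0"
        proof (cases "f j")
          case None
          have vsj: "vs j \<in> lat" using vs j by blast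
          have l: "(\<Sum>v\<in>V. (vs j \<bullet> v) *\<^sub>R y v) \<in> lat"
          proof (rule lat_sum)
            fix v' assume v': "v' \<in> V"
            then have "v' \<in> lat" using Vlat by blast
            then show "(vs j \<bullet> v') *\<^sub>R y v' \<in> lat"
              using lat_scale[OF ylat[OF v'] lat_inner[OF vsj]] by blast
          qed
          have "(\<Sum>v'\<in>V. (vs j \<bullet> v') *\<^sub>R y v') \<bullet> v = (\<Sum>v'\<in>V. if v = v' then vs j \<bullet> v else 0)"
            unfolding inner_sum_left using yinner v(1) by (intro sum.cong) auto
          also have "\<dots> = vs j \<bullet> v" using finV v(1) by (simp add: sum.delta)
          finally show ?thesis using None l vs j unfolding w_def
            by (auto simp: inner_diff_left intro: lat_diff)
        next
          case (Some v')
          have v'V: "v' \<in> V" using Some fjI I_def by auto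
          have "f j \<in> f ` {..<p}" using j by simp
          then have "v' \<noteq> v" using Some v(2) by auto
          note v' = v'V this
          then show ?thesis using Some ylat[OF v'(1)] yinner[OF v'(1) v(1)] unfolding w_def by auto
        qed
      qed
      have wt: "w j (f j) \<in> tangent_lat (sig v)" if j: "j < p" for j
        using F3[OF v(1)] wt0[OF j] by blast
      have "wedge p (\<lambda>j. w j (f j)) \<in> ext_power p (tangent_lat (sig v))"
        unfolding ext_power_def by (rule zspan_base) (use wt in blast)
      moreover have "sig v \<in> {\<sigma> \<in> faces_in A c R. \<tau> \<subseteq> \<sigma>}" using F2[OF v(1)] by blast
      ultimately have "wedge p (\<lambda>j. w j (f j)) \<in> U" unfolding U_def by blast
      then show ?thesis by (rule zspan_base)
    qed
    have "wedge p vs = (\<lambda>is. \<Sum>f\<in>F. of_int \<lfloor>\<Prod>j<p. a j (f j)\<rfloor> * wedge p (\<lambda>j. w j (f j)) is)"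
      unfolding exp by (intro ext sum.cong refl) (simp add: coefInt)
    also have "\<dots> \<in> zspan_fun U" using finF terms by (rule zspan_sum)
    finally show ?thesis .
  qed
  have sub: "ext_power p lat \<subseteq> zspan_fun U"
    unfolding ext_power_def by (rule zspan_mono) (use gen in blast)
  have zero: "(\<lambda>i. 0) \<in> ext_power p lat" unfolding ext_power_def by (rule zspan_zero)
  have coset: "{(\<lambda>i. w i + g i) | g. g \<in> zspan_fun U} = zspan_fun U" if w: "w \<in> ext_power p lat" for w
  proof (intro set_eqI iffI)
    fix h assume "h \<in> {(\<lambda>i. w i + g i) | g. g \<in> zspan_fun U}"
    then obtain g where "g \<in> zspan_fun U" "h = (\<lambda>i. w i + g i)" by blast
    then show "h \<in> zspan_fun U" using zspan_add[of w U g] sub w by blast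
  next
    fix h assume h: "h \<in> zspan_fun U"
    have "(\<lambda>i. h i - w i) \<in> zspan_fun U" using zspan_diff[OF h] sub w by blast
    moreover have "h = (\<lambda>i. w i + (h i - w i))" by simp
    ultimately show "h \<in> {(\<lambda>i. w i + g i) | g. g \<in> zspan_fun U}"
      by (intro CollectI exI[of _ "\<lambda>i. h i - w i"]) simp
  qed
  show ?thesis unfolding N_cosheaf_def NU
  proof (intro set_eqI iffI)
    fix X assume "X \<in> (\<lambda>w. {(\<lambda>i. w i + g i) | g. g \<in> zspan_fun U}) ` ext_power p lat"
    then obtain w where w: "w \<in> ext_power p lat" "X = {(\<lambda>i. w i + g i) | g. g \<in> zspan_fun U}"
      by (auto simp only: image_iff)
    then have "X = zspan_fun U" using coset[OF w(1)] by simp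
    then show "X \<in> {zspan_fun U}" by simp
  next
    fix X assume "X \<in> {zspan_fun U}"
    then have "X = {(\<lambda>i. (\<lambda>i. 0) i + g i) | g. g \<in> zspan_fun U}" using coset[OF zero] by simp
    then show "X \<in> (\<lambda>w. {(\<lambda>i. w i + g i) | g. g \<in> zspan_fun U}) ` ext_power p lat"
      using zero by (rule image_eqI)
  qed
qed

end
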